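(* Let $\mathcal M$ be a symmetric monoidal category and let $\pi_{\mathcal M}\colon\mathcal M\to P(\mathcal M)$ be the functor described in the context. Then a morphism $[A,f]\colon X\to Y$ of $P(\mathcal M)$ is an isomorphism in $P(\mathcal M)$ if and only if $f$ is an isomorphism in $\mathcal M$. In particular, $\pi_{\mathcal M}$ reflects isomorphisms.
   Context: Let $(\mathcal M,\otimes,I,a,\ell,r)$ be a symmetric monoidal category (associator $a$, left unitor $\ell$, right unitor $r$, symmetry $b$). An object $A$ is weakly invertible if there is $B$ with $A\otimes B\cong B\otimes A\cong I$. The category $P(\mathcal M)$ is defined as follows: its objects are those of $\mathcal M$; a morphism $X\to Y$ is an equivalence class $[A,f]$ of pairs $(A,f)$ with $A$ a weakly invertible object of $\mathcal M$ and $f\colon X\to Y\otimes A$ a morphism of $\mathcal M$, where $(A,f)$ and $(A',f')$ are equivalent iff there is an isomorphism $\alpha\colon A\to A'$ in $\mathcal M$ with $(Y\otimes\alpha)\circ f=f'$. The composite of $[A,f]\colon X\to Y$ and $[B,g]\colon Y\to Z$ is $[B\otimes A,\ a_{Z,B,A}\circ(g\otimes A)\circ f]$, and the identity on $X$ is $[I,r_X^{-1}]$. The functor $\pi_{\mathcal M}\colon\mathcal M\to P(\mathcal M)$ is the identity on objects and sends $f\colon X\to Y$ to $[I,\ r_Y^{-1}\circ f]$. *)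

theory Defs
  imports Main
begin

text \<open>A symmetric monoidal category, presented with object type 'o (every element
of 'o is an object) and morphism type 'm, with typed hom-sets.
Cmp g f is the composite "g after f".\<close>

record ('o, 'm) smc =
  Arr  :: "'o \<Rightarrow> 'o \<Rightarrow> 'm set"
  Cmp  :: "'m \<Rightarrow> 'm \<Rightarrow> 'm"
  Id   :: "'o \<Rightarrow> 'm"
  TenO :: "'o \<Rightarrow> 'o \<Rightarrow> 'o"
  TenA :: "'m \<Rightarrow> 'm \<Rightarrow> 'm"
  Unit :: "'o"
  Asc  :: "'o \<Rightarrow> 'o \<Rightarrow> 'o \<Rightarrow> 'm"
  Lu   :: "'o \<Rightarrow> 'm"
  Ru   :: "'o \<Rightarrow> 'm"
  Br   :: "'o \<Rightarrow> 'o \<Rightarrow> 'm"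

definition iso_in :: "('o, 'm) smc \<Rightarrow> 'o \<Rightarrow> 'o \<Rightarrow> 'm \<Rightarrow> bool" where
  "iso_in M X Y f \<longleftrightarrow> f \<in> Arr M X Y \<and>
     (\<exists>g \<in> Arr M Y X. Cmp M g f = Id M X \<and> Cmp M f g = Id M Y)"

definition inv_in :: "('o, 'm) smc \<Rightarrow> 'o \<Rightarrow> 'o \<Rightarrow> 'm \<Rightarrow> 'm" where
  "inv_in M X Y f = (SOME g. g \<in> Arr M Y X \<and> Cmp M g f = Id M X \<and> Cmp M f g = Id M Y)"

definition lw :: "('o, 'm) smc \<Rightarrow> 'o \<Rightarrow> 'm \<Rightarrow> 'm" where
  "lw M X f = TenA M (Id M X) f"
definition rw :: "('o, 'm) smc \<Rightarrow> 'm \<Rightarrow> 'o \<Rightarrow> 'm" where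
  "rw M f X = TenA M f (Id M X)"

definition smc :: "('o, 'm) smc \<Rightarrow> bool" where
  "smc M \<longleftrightarrow>
   \<comment> \<open>category\<close>
   (\<forall>X Y X' Y' f. f \<in> Arr M X Y \<longrightarrow> f \<in> Arr M X' Y' \<longrightarrow> X = X' \<and> Y = Y') \<and>
   (\<forall>X Y Z f g. f \<in> Arr M X Y \<longrightarrow> g \<in> Arr M Y Z \<longrightarrow> Cmp M g f \<in> Arr M X Z) \<and>
   (\<forall>X. Id M X \<in> Arr M X X) \<and>
   (\<forall>X Y f. f \<in> Arr M X Y \<longrightarrow> Cmp M f (Id M X) = f \<and> Cmp M (Id M Y) f = f) \<and>
   (\<forall>W X Y Z f g h. f \<in> Arr M W X \<longrightarrow> g \<in> Arr M X Y \<longrightarrow> h \<in> Arr M Y Z \<longrightarrow>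
      Cmp M h (Cmp M g f) = Cmp M (Cmp M h g) f) \<and>
   \<comment> \<open>tensor is a bifunctor\<close>
   (\<forall>X Y X' Y' f g. f \<in> Arr M X Y \<longrightarrow> g \<in> Arr M X' Y' \<longrightarrow>
      TenA M f g \<in> Arr M (TenO M X X') (TenO M Y Y')) \<and>
   (\<forall>X Y. TenA M (Id M X) (Id M Y) = Id M (TenO M X Y)) \<and>
   (\<forall>X Y Z X' Y' Z' f g f' g'. f \<in> Arr M X Y \<longrightarrow> g \<in> Arr M Y Z \<longrightarrow>
      f' \<in> Arr M X' Y' \<longrightarrow> g' \<in> Arr M Y' Z' \<longrightarrow>
      TenA M (Cmp M g f) (Cmp M g' f') = Cmp M (TenA M g g') (TenA M f f')) \<and>
   \<comment> \<open>associator: natural isomorphism\<close>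
   (\<forall>X Y Z. iso_in M (TenO M (TenO M X Y) Z) (TenO M X (TenO M Y Z)) (Asc M X Y Z)) \<and>
   (\<forall>X Y Z X' Y' Z' f g h. f \<in> Arr M X X' \<longrightarrow> g \<in> Arr M Y Y' \<longrightarrow> h \<in> Arr M Z Z' \<longrightarrow>
      Cmp M (Asc M X' Y' Z') (TenA M (TenA M f g) h)
        = Cmp M (TenA M f (TenA M g h)) (Asc M X Y Z)) \<and>
   \<comment> \<open>unitors: natural isomorphisms\<close>
   (\<forall>X. iso_in M (TenO M (Unit M) X) X (Lu M X)) \<and>
   (\<forall>X Y f. f \<in> Arr M X Y \<longrightarrow> Cmp M f (Lu M X) = Cmp M (Lu M Y) (lw M (Unit M) f)) \<and>
   (\<forall>X. iso_in M (TenO M X (Unit M)) X (Ru M X)) \<and>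
   (\<forall>X Y f. f \<in> Arr M X Y \<longrightarrow> Cmp M f (Ru M X) = Cmp M (Ru M Y) (rw M f (Unit M))) \<and>
   \<comment> \<open>symmetry: natural, self-inverse\<close>
   (\<forall>X Y. Br M X Y \<in> Arr M (TenO M X Y) (TenO M Y X)) \<and>
   (\<forall>X Y X' Y' f g. f \<in> Arr M X X' \<longrightarrow> g \<in> Arr M Y Y' \<longrightarrow>
      Cmp M (Br M X' Y') (TenA M f g) = Cmp M (TenA M g f) (Br M X Y)) \<and>
   (\<forall>X Y. Cmp M (Br M Y X) (Br M X Y) = Id M (TenO M X Y)) \<and>
   \<comment> \<open>pentagon\<close>
   (\<forall>W X Y Z.
      Cmp M (Asc M W X (TenO M Y Z)) (Asc M (TenO M W X) Y Z)
      = Cmp M (lw M W (Asc M X Y Z))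
          (Cmp M (Asc M W (TenO M X Y) Z) (rw M (Asc M W X Y) Z))) \<and>
   \<comment> \<open>triangle\<close>
   (\<forall>X Y. Cmp M (lw M X (Lu M Y)) (Asc M X (Unit M) Y) = rw M (Ru M X) Y) \<and>
   \<comment> \<open>hexagon\<close>
   (\<forall>X Y Z.
      Cmp M (Asc M Y Z X) (Cmp M (Br M X (TenO M Y Z)) (Asc M X Y Z))
      = Cmp M (lw M Y (Br M X Z)) (Cmp M (Asc M Y X Z) (rw M (Br M X Y) Z)))"

definition weakly_invertible :: "('o, 'm) smc \<Rightarrow> 'o \<Rightarrow> bool" where
  "weakly_invertible M A \<longleftrightarrow> (\<exists>B.
     (\<exists>u. iso_in M (TenO M A B) (Unit M) u) \<and> (\<exists>v. iso_in M (TenO M B A) (Unit M) v))"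

text \<open>Representatives (A, f) of morphisms X \<rightarrow> Y of P(M).\<close>
definition P_rep :: "('o, 'm) smc \<Rightarrow> 'o \<Rightarrow> 'o \<Rightarrow> 'o \<times> 'm \<Rightarrow> bool" where
  "P_rep M X Y p \<longleftrightarrow> weakly_invertible M (fst p) \<and> snd p \<in> Arr M X (TenO M Y (fst p))"

definition P_equiv :: "('o, 'm) smc \<Rightarrow> 'o \<Rightarrow> 'o \<times> 'm \<Rightarrow> 'o \<times> 'm \<Rightarrow> bool" where
  "P_equiv M Y p q \<longleftrightarrow>
     (\<exists>\<alpha>. iso_in M (fst p) (fst q) \<alpha> \<and> Cmp M (lw M Y \<alpha>) (snd p) = snd q)"

text \<open>The morphism [A,f] : X \<rightarrow> Y of P(M), i.e. the equivalence class of (A,f).\<close>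
definition P_class :: "('o, 'm) smc \<Rightarrow> 'o \<Rightarrow> 'o \<Rightarrow> 'o \<times> 'm \<Rightarrow> ('o \<times> 'm) set" where
  "P_class M X Y p = {q. P_rep M X Y q \<and> P_equiv M Y p q}"

text \<open>Composite of representatives (A,f) : X \<rightarrow> Y and (B,g) : Y \<rightarrow> Z.\<close>
definition P_comp_rep :: "('o, 'm) smc \<Rightarrow> 'o \<Rightarrow> 'o \<times> 'm \<Rightarrow> 'o \<times> 'm \<Rightarrow> 'o \<times> 'm" where
  "P_comp_rep M Z q p =
     (TenO M (fst q) (fst p),
      Cmp M (Asc M Z (fst q) (fst p)) (Cmp M (rw M (snd q) (fst p)) (snd p)))"

definition P_id_rep :: "('o, 'm) smc \<Rightarrow> 'o \<Rightarrow> 'o \<times> 'm" where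
  "P_id_rep M X = (Unit M, inv_in M (TenO M X (Unit M)) X (Ru M X))"

definition P_iso :: "('o, 'm) smc \<Rightarrow> 'o \<Rightarrow> 'o \<Rightarrow> 'o \<times> 'm \<Rightarrow> bool" where
  "P_iso M X Y p \<longleftrightarrow> P_rep M X Y p \<and> (\<exists>q. P_rep M Y X q \<and>
     P_class M X X (P_comp_rep M X q p) = P_class M X X (P_id_rep M X) \<and>
     P_class M Y Y (P_comp_rep M Y p q) = P_class M Y Y (P_id_rep M Y))"

text \<open>The functor \<pi>_M on morphisms f : X \<rightarrow> Y (returns a representative).\<close>
definition pi_rep :: "('o, 'm) smc \<Rightarrow> 'o \<Rightarrow> 'm \<Rightarrow> 'o \<times> 'm" where
  "pi_rep M Y f = (Unit M, Cmp M (inv_in M (TenO M Y (Unit M)) Y (Ru M Y)) f)"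

end

theory Submission
  imports Defs
begin



locale SM =
  fixes M :: "('o, 'm) smc"
  assumes smc: "smc M"
begin

lemmas ax = smc[unfolded smc_def lw_def rw_def]

abbreviation C (infixl "\<cdot>" 55) where "g \<cdot> f \<equiv> Cmp M g f"
abbreviation T (infixr "\<otimes>" 60) where "f \<otimes> g \<equiv> TenA M f g"
abbreviation O (infixr "\<odot>" 65) where "X \<odot> Y \<equiv> TenO M X Y"
abbreviation Ar where "Ar X Y \<equiv> Arr M X Y"
abbreviation I where "I \<equiv> Unit M"
abbreviation ii ("\<one>") where "ii X \<equiv> Id M X"
abbreviation a where "a X Y Z \<equiv> Asc M X Y Z"
abbreviation ia where "ia X Y Z \<equiv> inv_in M ((X \<odot> Y) \<odot> Z) (X \<odot> (Y \<odot> Z)) (Asc M X Y Z)"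
abbreviation l where "l X \<equiv> Lu M X"
abbreviation il where "il X \<equiv> inv_in M (I \<odot> X) X (Lu M X)"
abbreviation r where "r X \<equiv> Ru M X"
abbreviation ir where "ir X \<equiv> inv_in M (X \<odot> I) X (Ru M X)"
abbreviation iso where "iso X Y f \<equiv> iso_in M X Y f"
abbreviation inv where "inv X Y f \<equiv> inv_in M X Y f"

lemma arr_unique: "f \<in> Ar X Y \<Longrightarrow> f \<in> Ar X' Y' \<Longrightarrow> X = X' \<and> Y = Y'"
  using ax[THEN conjunct1] by blast
lemma comp_arr: "f \<in> Ar X Y \<Longrightarrow> g \<in> Ar Y Z \<Longrightarrow> g \<cdot> f \<in> Ar X Z"
  using ax[THEN conjunct2, THEN conjunct1] by blast
lemma id_arr: "\<one> X \<in> Ar X X"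
  using ax[THEN conjunct2, THEN conjunct2, THEN conjunct1] by blast
lemma id_r: "f \<in> Ar X Y \<Longrightarrow> f \<cdot> \<one> X = f"
  using ax[THEN conjunct2, THEN conjunct2, THEN conjunct2, THEN conjunct1] by blast
lemma id_l: "f \<in> Ar X Y \<Longrightarrow> \<one> Y \<cdot> f = f"
  using ax[THEN conjunct2, THEN conjunct2, THEN conjunct2, THEN conjunct1] by blast
lemma assoc: "f \<in> Ar W X \<Longrightarrow> g \<in> Ar X Y \<Longrightarrow> h \<in> Ar Y Z \<Longrightarrow> h \<cdot> (g \<cdot> f) = (h \<cdot> g) \<cdot> f"
  using ax[THEN conjunct2, THEN conjunct2, THEN conjunct2, THEN conjunct2, THEN conjunct1] by blast
lemma ten_arr: "f \<in> Ar X Y \<Longrightarrow> g \<in> Ar X' Y' \<Longrightarrow> f \<otimes> g \<in> Ar (X \<odot> X') (Y \<odot> Y')"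
  using ax[THEN conjunct2, THEN conjunct2, THEN conjunct2, THEN conjunct2, THEN conjunct2, THEN conjunct1] by blast
lemma ten_id: "\<one> X \<otimes> \<one> Y = \<one> (X \<odot> Y)"
  using ax[THEN conjunct2, THEN conjunct2, THEN conjunct2, THEN conjunct2, THEN conjunct2, THEN conjunct2, THEN conjunct1] by blast
lemma interchange: "f \<in> Ar X Y \<Longrightarrow> g \<in> Ar Y Z \<Longrightarrow> f' \<in> Ar X' Y' \<Longrightarrow> g' \<in> Ar Y' Z' \<Longrightarrow>
   (g \<cdot> f) \<otimes> (g' \<cdot> f') = (g \<otimes> g') \<cdot> (f \<otimes> f')"
  using ax[THEN conjunct2, THEN conjunct2, THEN conjunct2, THEN conjunct2, THEN conjunct2, THEN conjunct2, THEN conjunct2, THEN conjunct1] by blast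
lemma a_iso: "iso ((X \<odot> Y) \<odot> Z) (X \<odot> (Y \<odot> Z)) (a X Y Z)"
  using ax[THEN conjunct2, THEN conjunct2, THEN conjunct2, THEN conjunct2, THEN conjunct2, THEN conjunct2, THEN conjunct2, THEN conjunct2, THEN conjunct1] by blast
lemma a_nat: "f \<in> Ar X X' \<Longrightarrow> g \<in> Ar Y Y' \<Longrightarrow> h \<in> Ar Z Z' \<Longrightarrow>
      a X' Y' Z' \<cdot> ((f \<otimes> g) \<otimes> h) = (f \<otimes> (g \<otimes> h)) \<cdot> a X Y Z"
  using ax[THEN conjunct2, THEN conjunct2, THEN conjunct2, THEN conjunct2, THEN conjunct2, THEN conjunct2, THEN conjunct2, THEN conjunct2, THEN conjunct2, THEN conjunct1] by blast
lemma l_iso: "iso (I \<odot> X) X (l X)"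
  using ax[THEN conjunct2, THEN conjunct2, THEN conjunct2, THEN conjunct2, THEN conjunct2, THEN conjunct2, THEN conjunct2, THEN conjunct2, THEN conjunct2, THEN conjunct2, THEN conjunct1] by blast
lemma l_nat: "f \<in> Ar X Y \<Longrightarrow> f \<cdot> l X = l Y \<cdot> (\<one> I \<otimes> f)"
  using ax[THEN conjunct2, THEN conjunct2, THEN conjunct2, THEN conjunct2, THEN conjunct2, THEN conjunct2, THEN conjunct2, THEN conjunct2, THEN conjunct2, THEN conjunct2, THEN conjunct2, THEN conjunct1] by blast
lemma r_iso: "iso (X \<odot> I) X (r X)"
  using ax[THEN conjunct2, THEN conjunct2, THEN conjunct2, THEN conjunct2, THEN conjunct2, THEN conjunct2, THEN conjunct2, THEN conjunct2, THEN conjunct2, THEN conjunct2, THEN conjunct2, THEN conjunct2, THEN conjunct1] by blast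
lemma r_nat: "f \<in> Ar X Y \<Longrightarrow> f \<cdot> r X = r Y \<cdot> (f \<otimes> \<one> I)"
  using ax[THEN conjunct2, THEN conjunct2, THEN conjunct2, THEN conjunct2, THEN conjunct2, THEN conjunct2, THEN conjunct2, THEN conjunct2, THEN conjunct2, THEN conjunct2, THEN conjunct2, THEN conjunct2, THEN conjunct2, THEN conjunct1] by blast
lemma br_arr: "Br M X Y \<in> Ar (X \<odot> Y) (Y \<odot> X)"
  using ax[THEN conjunct2, THEN conjunct2, THEN conjunct2, THEN conjunct2, THEN conjunct2, THEN conjunct2, THEN conjunct2, THEN conjunct2, THEN conjunct2, THEN conjunct2, THEN conjunct2, THEN conjunct2, THEN conjunct2, THEN conjunct2, THEN conjunct1] by blast
lemma br_nat: "f \<in> Ar X X' \<Longrightarrow> g \<in> Ar Y Y' \<Longrightarrow>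
      Br M X' Y' \<cdot> (f \<otimes> g) = (g \<otimes> f) \<cdot> Br M X Y"
  using ax[THEN conjunct2, THEN conjunct2, THEN conjunct2, THEN conjunct2, THEN conjunct2, THEN conjunct2, THEN conjunct2, THEN conjunct2, THEN conjunct2, THEN conjunct2, THEN conjunct2, THEN conjunct2, THEN conjunct2, THEN conjunct2, THEN conjunct2, THEN conjunct1] by blast
lemma br_inv: "Br M Y X \<cdot> Br M X Y = \<one> (X \<odot> Y)"
  using ax[THEN conjunct2, THEN conjunct2, THEN conjunct2, THEN conjunct2, THEN conjunct2, THEN conjunct2, THEN conjunct2, THEN conjunct2, THEN conjunct2, THEN conjunct2, THEN conjunct2, THEN conjunct2, THEN conjunct2, THEN conjunct2, THEN conjunct2, THEN conjunct2, THEN conjunct1] by blast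
lemma pentagon: "a W X (Y \<odot> Z) \<cdot> a (W \<odot> X) Y Z
      = (\<one> W \<otimes> a X Y Z) \<cdot> (a W (X \<odot> Y) Z \<cdot> (a W X Y \<otimes> \<one> Z))"
  using ax[THEN conjunct2, THEN conjunct2, THEN conjunct2, THEN conjunct2, THEN conjunct2, THEN conjunct2, THEN conjunct2, THEN conjunct2, THEN conjunct2, THEN conjunct2, THEN conjunct2, THEN conjunct2, THEN conjunct2, THEN conjunct2, THEN conjunct2, THEN conjunct2, THEN conjunct2, THEN conjunct1] by blast
lemma triangle: "(\<one> X \<otimes> l Y) \<cdot> a X I Y = r X \<otimes> \<one> Y"
  using ax[THEN conjunct2, THEN conjunct2, THEN conjunct2, THEN conjunct2, THEN conjunct2, THEN conjunct2, THEN conjunct2, THEN conjunct2, THEN conjunct2, THEN conjunct2, THEN conjunct2, THEN conjunct2, THEN conjunct2, THEN conjunct2, THEN conjunct2, THEN conjunct2, THEN conjunct2, THEN conjunct2, THEN conjunct1] by blast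

lemma inv_props: assumes "iso X Y f"
  shows "inv X Y f \<in> Ar Y X" "inv X Y f \<cdot> f = \<one> X" "f \<cdot> inv X Y f = \<one> Y"
proof -
  have "\<exists>g. g \<in> Ar Y X \<and> g \<cdot> f = \<one> X \<and> f \<cdot> g = \<one> Y" using assms unfolding iso_in_def by blast
  then have "inv X Y f \<in> Ar Y X \<and> inv X Y f \<cdot> f = \<one> X \<and> f \<cdot> inv X Y f = \<one> Y"
    unfolding inv_in_def by (rule someI_ex)
  then show "inv X Y f \<in> Ar Y X" "inv X Y f \<cdot> f = \<one> X" "f \<cdot> inv X Y f = \<one> Y" by auto
qed

lemma iso_arr: "iso X Y f \<Longrightarrow> f \<in> Ar X Y" unfolding iso_in_def by blast

lemma inv_arr: "iso X Y f \<Longrightarrow> inv X Y f \<in> Ar Y X" using inv_props by blast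

lemma a_arr: "a X Y Z \<in> Ar ((X \<odot> Y) \<odot> Z) (X \<odot> (Y \<odot> Z))" using a_iso iso_arr by blast
lemma ia_arr: "ia X Y Z \<in> Ar (X \<odot> (Y \<odot> Z)) ((X \<odot> Y) \<odot> Z)" using a_iso inv_arr by blast
lemma l_arr: "l X \<in> Ar (I \<odot> X) X" using l_iso iso_arr by blast
lemma il_arr: "il X \<in> Ar X (I \<odot> X)" using l_iso inv_arr by blast
lemma r_arr: "r X \<in> Ar (X \<odot> I) X" using r_iso iso_arr by blast
lemma ir_arr: "ir X \<in> Ar X (X \<odot> I)" using r_iso inv_arr by blast

lemmas ty = comp_arr id_arr ten_arr br_arr a_arr ia_arr l_arr il_arr r_arr ir_arr


definition dom where "dom f = (SOME X. \<exists>Y. f \<in> Ar X Y)"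
definition cod where "cod f = (SOME Y. \<exists>X. f \<in> Ar X Y)"
definition arr where "arr f \<longleftrightarrow> (\<exists>X Y. f \<in> Ar X Y)"

lemma arrI: assumes "f \<in> Ar X Y" shows "arr f" "dom f = X" "cod f = Y"
proof -
  show "arr f" using assms unfolding arr_def by blast
  have "\<exists>Y. f \<in> Ar (dom f) Y" unfolding dom_def by (rule someI_ex) (use assms in blast)
  then show "dom f = X" using assms arr_unique by blast
  have "\<exists>X. f \<in> Ar X (cod f)" unfolding cod_def by (rule someI_ex) (use assms in blast)
  then show "cod f = Y" using assms arr_unique by blast
qed

lemma arr_in: "arr f \<Longrightarrow> f \<in> Ar (dom f) (cod f)"
  unfolding arr_def using arrI by metis

lemma arr_iff: "f \<in> Ar X Y \<longleftrightarrow> arr f \<and> dom f = X \<and> cod f = Y"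
  using arrI arr_in by metis

lemma comp_simps[simp]: assumes "arr f" "arr g" "dom g = cod f"
  shows "arr (g \<cdot> f)" "dom (g \<cdot> f) = dom f" "cod (g \<cdot> f) = cod g"
proof -
  have "g \<cdot> f \<in> Ar (dom f) (cod g)"
    using comp_arr[of f "dom f" "cod f" g "cod g"] assms arr_in[of f] arr_in[of g] by metis
  then show "arr (g \<cdot> f)" "dom (g \<cdot> f) = dom f" "cod (g \<cdot> f) = cod g" by (rule arrI)+
qed

lemma ten_simps[simp]: assumes "arr f" "arr g"
  shows "arr (f \<otimes> g)" "dom (f \<otimes> g) = dom f \<odot> dom g" "cod (f \<otimes> g) = cod f \<odot> cod g"
proof -
  have "f \<otimes> g \<in> Ar (dom f \<odot> dom g) (cod f \<odot> cod g)"
    using ten_arr[OF arr_in[OF assms(1)] arr_in[OF assms(2)]] .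
  then show "arr (f \<otimes> g)" "dom (f \<otimes> g) = dom f \<odot> dom g" "cod (f \<otimes> g) = cod f \<odot> cod g" by (rule arrI)+
qed

lemma id_simps[simp]: "arr (\<one> X)" "dom (\<one> X) = X" "cod (\<one> X) = X"
  using id_arr by (rule arrI)+

lemma struct_simps[simp]:
  "arr (a X Y Z)" "dom (a X Y Z) = (X \<odot> Y) \<odot> Z" "cod (a X Y Z) = X \<odot> (Y \<odot> Z)"
  "arr (ia X Y Z)" "cod (ia X Y Z) = (X \<odot> Y) \<odot> Z" "dom (ia X Y Z) = X \<odot> (Y \<odot> Z)"
  "arr (l X)" "dom (l X) = I \<odot> X" "cod (l X) = X"
  "arr (il X)" "cod (il X) = I \<odot> X" "dom (il X) = X"
  "arr (r X)" "dom (r X) = X \<odot> I" "cod (r X) = X"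
  "arr (ir X)" "cod (ir X) = X \<odot> I" "dom (ir X) = X"
  "arr (Br M X Y)" "dom (Br M X Y) = X \<odot> Y" "cod (Br M X Y) = Y \<odot> X"
  by (rule arrI, rule a_arr ia_arr l_arr il_arr r_arr ir_arr br_arr)+

lemma inv_simps[simp]: assumes "iso X Y f"
  shows "arr (inv X Y f)" "dom (inv X Y f) = Y" "cod (inv X Y f) = X"
    "inv X Y f \<cdot> f = \<one> X" "f \<cdot> inv X Y f = \<one> Y"
  using inv_props[OF assms] by (blast intro: arrI)+

lemma iso_simps: assumes "iso X Y f" shows "arr f" "dom f = X" "cod f = Y"
  using iso_arr[OF assms] by (rule arrI)+

lemma idl[simp]: "arr f \<Longrightarrow> cod f = Y \<Longrightarrow> \<one> Y \<cdot> f = f"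
  using id_l arr_in by blast
lemma idr[simp]: "arr f \<Longrightarrow> dom f = X \<Longrightarrow> f \<cdot> \<one> X = f"
  using id_r arr_in by blast

lemma assoc'[simp]: "arr f \<Longrightarrow> arr g \<Longrightarrow> arr h \<Longrightarrow> dom g = cod f \<Longrightarrow> dom h = cod g \<Longrightarrow>
  h \<cdot> (g \<cdot> f) = h \<cdot> g \<cdot> f"
  by (metis assoc arr_in)

lemma inv_pre[simp]: assumes "iso X Y f" "arr x"
  shows "dom x = X \<Longrightarrow> x \<cdot> inv X Y f \<cdot> f = x"
    "dom x = Y \<Longrightarrow> x \<cdot> f \<cdot> inv X Y f = x"
  using assms by (simp_all add: iso_simps flip: assoc')

lemma ten_id'[simp]: "\<one> X \<otimes> \<one> Y = \<one> (X \<odot> Y)" by (rule ten_id)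

lemma inter: "arr f \<Longrightarrow> arr g \<Longrightarrow> arr f' \<Longrightarrow> arr g' \<Longrightarrow> dom g = cod f \<Longrightarrow> dom g' = cod f' \<Longrightarrow>
  (g \<otimes> g') \<cdot> (f \<otimes> f') = (g \<cdot> f) \<otimes> (g' \<cdot> f')"
  by (metis interchange arr_in)

lemma pre: "p \<cdot> q = p' \<cdot> q' \<Longrightarrow> arr x \<Longrightarrow> arr p \<Longrightarrow> arr q \<Longrightarrow> arr p' \<Longrightarrow> arr q' \<Longrightarrow>
   dom p = cod q \<Longrightarrow> dom p' = cod q' \<Longrightarrow> dom x = cod p \<Longrightarrow> cod p = cod p' \<Longrightarrow>
   x \<cdot> p \<cdot> q = x \<cdot> p' \<cdot> q'"
  by (metis assoc')

lemma iso_intro: "arr f \<Longrightarrow> arr g \<Longrightarrow> dom f = X \<Longrightarrow> cod f = Y \<Longrightarrow> dom g = Y \<Longrightarrow> cod g = X \<Longrightarrow>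
   g \<cdot> f = \<one> X \<Longrightarrow> f \<cdot> g = \<one> Y \<Longrightarrow> iso X Y f"
  unfolding iso_in_def using arr_iff by metis

lemma inv_unique: assumes "iso X Y f" "arr g" "dom g = Y" "cod g = X" "g \<cdot> f = \<one> X"
  shows "g = inv X Y f"
proof -
  have "g = g \<cdot> (f \<cdot> inv X Y f)" using assms by (simp add: iso_simps)
  also have "\<dots> = g \<cdot> f \<cdot> inv X Y f" using assms by (intro assoc') (simp_all add: iso_simps)
  also have "\<dots> = inv X Y f" using assms by (simp add: iso_simps)
  finally show ?thesis .
qed

lemma iso_inv: "iso X Y f \<Longrightarrow> iso Y X (inv X Y f)"
  by (rule iso_intro[where g=f]) (simp_all add: iso_simps)

lemma iso_comp: assumes "iso X Y f" "iso Y Z g" shows "iso X Z (g \<cdot> f)"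
  by (rule iso_intro[where g="inv X Y f \<cdot> inv Y Z g"]) (use assms in \<open>simp_all add: iso_simps\<close>)

lemma iso_ten: assumes "iso X Y f" "iso X' Y' g" shows "iso (X \<odot> X') (Y \<odot> Y') (f \<otimes> g)"
  by (rule iso_intro[where g="inv X Y f \<otimes> inv X' Y' g"]) (use assms in \<open>simp_all add: iso_simps inter\<close>)

lemma iso_id: "iso X X (\<one> X)"
  by (rule iso_intro[where g="\<one> X"]) simp_all

lemma cancel_l: assumes "iso Y Z h" "arr s" "arr t" "cod s = Y" "cod t = Y" "h \<cdot> s = h \<cdot> t"
  shows "s = t"
proof -
  have "s = inv Y Z h \<cdot> h \<cdot> s" using assms(1-5) by (simp add: iso_simps)
  also have "\<dots> = inv Y Z h \<cdot> (h \<cdot> s)" using assms by (intro assoc'[symmetric]) (simp_all add: iso_simps)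
  also have "\<dots> = inv Y Z h \<cdot> (h \<cdot> t)" using assms by (simp only: assms(6))
  also have "\<dots> = inv Y Z h \<cdot> h \<cdot> t" using assms by (intro assoc') (simp_all add: iso_simps)
  also have "\<dots> = t" using assms by (simp add: iso_simps)
  finally show ?thesis .
qed

lemma cancel_r: assumes "iso X Y h" "arr s" "arr t" "dom s = Y" "dom t = Y" "s \<cdot> h = t \<cdot> h"
  shows "s = t"
proof -
  have "s = s \<cdot> h \<cdot> inv X Y h" using assms(1-5) by (simp add: iso_simps)
  also have "\<dots> = t \<cdot> h \<cdot> inv X Y h" using assms by (simp only: assms(6))
  also have "\<dots> = t" using assms by (simp add: iso_simps)
  finally show ?thesis .
qed

lemma a_nat': "arr f \<Longrightarrow> arr g \<Longrightarrow> arr h \<Longrightarrow>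
  a (cod f) (cod g) (cod h) \<cdot> ((f \<otimes> g) \<otimes> h) = (f \<otimes> (g \<otimes> h)) \<cdot> a (dom f) (dom g) (dom h)"
  using a_nat arr_in by blast

lemma ia_nat: assumes "arr f" "arr g" "arr h"
  shows "ia (cod f) (cod g) (cod h) \<cdot> (f \<otimes> (g \<otimes> h)) = ((f \<otimes> g) \<otimes> h) \<cdot> ia (dom f) (dom g) (dom h)"
proof -
  have "ia (cod f) (cod g) (cod h) \<cdot> (f \<otimes> (g \<otimes> h)) = ia (cod f) (cod g) (cod h) \<cdot> (f \<otimes> (g \<otimes> h)) \<cdot> a (dom f) (dom g) (dom h) \<cdot> ia (dom f) (dom g) (dom h)"
    using assms a_iso by (simp flip: assoc')
  also have "\<dots> = ia (cod f) (cod g) (cod h) \<cdot> a (cod f) (cod g) (cod h) \<cdot> ((f \<otimes> g) \<otimes> h) \<cdot> ia (dom f) (dom g) (dom h)"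
    using assms by (simp add: a_nat' flip: assoc')
  also have "\<dots> = ((f \<otimes> g) \<otimes> h) \<cdot> ia (dom f) (dom g) (dom h)"
    using assms a_iso by simp
  finally show ?thesis .
qed

lemma l_nat': "arr f \<Longrightarrow> f \<cdot> l (dom f) = l (cod f) \<cdot> (\<one> I \<otimes> f)"
  using l_nat arr_in by blast
lemma r_nat': "arr f \<Longrightarrow> f \<cdot> r (dom f) = r (cod f) \<cdot> (f \<otimes> \<one> I)"
  using r_nat arr_in by blast

end


context SM begin

definition eta where "eta B A v Z = l Z \<cdot> (v \<otimes> \<one> Z) \<cdot> ia B A Z"

lemma eta_iso: assumes "iso (B \<odot> A) I v" shows "iso (B \<odot> (A \<odot> Z)) Z (eta B A v Z)"
  unfolding eta_def
  by (intro iso_comp[OF iso_inv[OF a_iso] iso_comp[OF iso_ten[OF assms iso_id] l_iso]])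

lemma eta_simps[simp]: assumes "iso (B \<odot> A) I v"
  shows "arr (eta B A v Z)" "dom (eta B A v Z) = B \<odot> (A \<odot> Z)" "cod (eta B A v Z) = Z"
  using iso_simps[OF eta_iso[OF assms]] by auto

lemma eta_nat: assumes v: "iso (B \<odot> A) I v" and s: "arr s"
  shows "eta B A v (cod s) \<cdot> (\<one> B \<otimes> (\<one> A \<otimes> s)) = s \<cdot> eta B A v (dom s)"
proof -
  note vs = iso_simps[OF v]
  have n: "ia B A (cod s) \<cdot> (\<one> B \<otimes> (\<one> A \<otimes> s)) = (\<one> (B \<odot> A) \<otimes> s) \<cdot> ia B A (dom s)"
    using ia_nat[of "\<one> B" "\<one> A" s] s by simp
  have i1: "(v \<otimes> \<one> (cod s)) \<cdot> (\<one> (B \<odot> A) \<otimes> s) = (\<one> I \<otimes> s) \<cdot> (v \<otimes> \<one> (dom s))"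
    using s vs by (simp add: inter)
  have "eta B A v (cod s) \<cdot> (\<one> B \<otimes> (\<one> A \<otimes> s))
      = l (cod s) \<cdot> (v \<otimes> \<one> (cod s)) \<cdot> ia B A (cod s) \<cdot> (\<one> B \<otimes> (\<one> A \<otimes> s))"
    unfolding eta_def ..
  also have "\<dots> = l (cod s) \<cdot> (v \<otimes> \<one> (cod s)) \<cdot> (\<one> (B \<odot> A) \<otimes> s) \<cdot> ia B A (dom s)"
    by (rule pre[OF n]) (use s vs in simp_all)
  also have "\<dots> = l (cod s) \<cdot> (\<one> I \<otimes> s) \<cdot> (v \<otimes> \<one> (dom s)) \<cdot> ia B A (dom s)"
    by (rule arg_cong[where f="\<lambda>x. x \<cdot> ia B A (dom s)"], rule pre[OF i1]) (use s vs in simp_all)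
  also have "\<dots> = s \<cdot> l (dom s) \<cdot> (v \<otimes> \<one> (dom s)) \<cdot> ia B A (dom s)"
    using l_nat'[OF s] by simp
  also have "\<dots> = s \<cdot> eta B A v (dom s)"
    unfolding eta_def using s vs by simp
  finally show ?thesis .
qed


lemma faith: assumes v: "iso (B \<odot> A) I v" and s: "arr s" and t: "arr t"
  and d: "dom s = dom t" and c: "cod s = cod t" and e: "\<one> A \<otimes> s = \<one> A \<otimes> t"
  shows "s = t"
proof (rule cancel_r[OF eta_iso[OF v, of "dom s"] s t])
  have "s \<cdot> eta B A v (dom s) = eta B A v (cod s) \<cdot> (\<one> B \<otimes> (\<one> A \<otimes> s))"
    using eta_nat[OF v s] by simp
  also have "\<dots> = eta B A v (cod t) \<cdot> (\<one> B \<otimes> (\<one> A \<otimes> t))" using e c by simp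
  also have "\<dots> = t \<cdot> eta B A v (dom s)" using eta_nat[OF v t] d by simp
  finally show "s \<cdot> eta B A v (dom s) = t \<cdot> eta B A v (dom s)" .
qed (use d in simp_all)

lemma full: assumes v: "iso (B \<odot> A) I v" and u: "iso (A \<odot> B) I u"
  and m: "arr m" "dom m = A \<odot> Z" "cod m = A \<odot> Z'"
  shows "\<exists>t. arr t \<and> dom t = Z \<and> cod t = Z' \<and> \<one> A \<otimes> t = m"
proof -
  note vs = iso_simps[OF v] and us = iso_simps[OF u]
  define t where "t = eta B A v Z' \<cdot> (\<one> B \<otimes> m) \<cdot> inv (B \<odot> (A \<odot> Z)) Z (eta B A v Z)"
  note ei = eta_iso[OF v, of Z]
  have ts: "arr t" "dom t = Z" "cod t = Z'" unfolding t_def using v m ei by simp_all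
  have "eta B A v Z' \<cdot> (\<one> B \<otimes> (\<one> A \<otimes> t)) = t \<cdot> eta B A v Z"
    using eta_nat[OF v ts(1)] ts by simp
  also have "\<dots> = eta B A v Z' \<cdot> (\<one> B \<otimes> m)" unfolding t_def using v m ei by simp
  finally have "\<one> B \<otimes> (\<one> A \<otimes> t) = \<one> B \<otimes> m"
    by (rule cancel_l[OF eta_iso[OF v, of Z'], rotated -1]) (use v m ts in simp_all)
  then have "\<one> A \<otimes> t = m"
    by (rule faith[OF u, rotated -1]) (use m ts in simp_all)
  then show ?thesis using ts by blast
qed

lemma reflect: assumes v: "iso (B \<odot> A) I v" and u: "iso (A \<odot> B) I u" and w: "arr w"
  and wi: "iso (A \<odot> dom w) (A \<odot> cod w) (\<one> A \<otimes> w)"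
  shows "iso (dom w) (cod w) w"
proof -
  note ws = iso_simps[OF iso_inv[OF wi]]
  obtain w' where w': "arr w'" "dom w' = cod w" "cod w' = dom w"
    "\<one> A \<otimes> w' = inv (A \<odot> dom w) (A \<odot> cod w) (\<one> A \<otimes> w)"
    using full[OF v u ws(1)] ws by auto
  have "\<one> A \<otimes> (w' \<cdot> w) = (\<one> A \<otimes> w') \<cdot> (\<one> A \<otimes> w)" using w w'(1-3) by (simp add: inter)
  also have "\<dots> = \<one> A \<otimes> \<one> (dom w)" using wi w' by simp
  finally have 1: "w' \<cdot> w = \<one> (dom w)"
    by (rule faith[OF v, rotated -1]) (use w w' in simp_all)
  have "\<one> A \<otimes> (w \<cdot> w') = (\<one> A \<otimes> w) \<cdot> (\<one> A \<otimes> w')" using w w'(1-3) by (simp add: inter)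
  also have "\<dots> = \<one> A \<otimes> \<one> (cod w)" using wi w' by simp
  finally have 2: "w \<cdot> w' = \<one> (cod w)"
    by (rule faith[OF v, rotated -1]) (use w w' in simp_all)
  show ?thesis by (rule iso_intro[OF w w'(1)]) (use w' 1 2 in simp_all)
qed

end


context SM begin

lemma inter_pre: "arr x \<Longrightarrow> arr f \<Longrightarrow> arr g \<Longrightarrow> arr f' \<Longrightarrow> arr g' \<Longrightarrow> dom g = cod f \<Longrightarrow> dom g' = cod f' \<Longrightarrow>
  dom x = cod g \<odot> cod g' \<Longrightarrow> x \<cdot> (g \<otimes> g') \<cdot> (f \<otimes> f') = x \<cdot> ((g \<cdot> f) \<otimes> (g' \<cdot> f'))"
  by (simp add: inter flip: assoc')

lemma faith_r: assumes "arr s" "arr t" "dom s = dom t" "cod s = cod t" "s \<otimes> \<one> I = t \<otimes> \<one> I"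
  shows "s = t"
proof (rule cancel_r[OF r_iso[of "dom s"]])
  show "s \<cdot> r (dom s) = t \<cdot> r (dom s)" using r_nat'[of s] r_nat'[of t] assms by simp
qed (use assms in simp_all)

lemma kelly: "r (X \<odot> Y) = (\<one> X \<otimes> r Y) \<cdot> a X Y I"
proof (rule faith_r)
  have t1: "(\<one> (X \<odot> Y) \<otimes> l I) \<cdot> a (X \<odot> Y) I I = r (X \<odot> Y) \<otimes> \<one> I"
    using triangle[of "X \<odot> Y" I] .
  have n1: "a X Y I \<cdot> (\<one> (X \<odot> Y) \<otimes> l I) = (\<one> X \<otimes> (\<one> Y \<otimes> l I)) \<cdot> a X Y (I \<odot> I)"
    using a_nat'[of "\<one> X" "\<one> Y" "l I"] by simp
  have n1': "\<one> (X \<odot> Y) \<otimes> l I = ia X Y I \<cdot> (\<one> X \<otimes> (\<one> Y \<otimes> l I)) \<cdot> a X Y (I \<odot> I)"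
  proof -
    have "\<one> (X \<odot> Y) \<otimes> l I = ia X Y I \<cdot> a X Y I \<cdot> (\<one> (X \<odot> Y) \<otimes> l I)" using a_iso by simp
    also have "\<dots> = ia X Y I \<cdot> (a X Y I \<cdot> (\<one> (X \<odot> Y) \<otimes> l I))" by (rule assoc'[symmetric]) simp_all
    also have "\<dots> = ia X Y I \<cdot> ((\<one> X \<otimes> (\<one> Y \<otimes> l I)) \<cdot> a X Y (I \<odot> I))" by (simp only: n1)
    also have "\<dots> = ia X Y I \<cdot> (\<one> X \<otimes> (\<one> Y \<otimes> l I)) \<cdot> a X Y (I \<odot> I)" by (rule assoc') simp_all
    finally show ?thesis .
  qed
  have pent: "a X Y (I \<odot> I) \<cdot> a (X \<odot> Y) I I = (\<one> X \<otimes> a Y I I) \<cdot> a X (Y \<odot> I) I \<cdot> (a X Y I \<otimes> \<one> I)"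
    using pentagon[of X Y I I] by simp
  have t2: "(\<one> Y \<otimes> l I) \<cdot> a Y I I = r Y \<otimes> \<one> I" using triangle[of Y I] .
  have n2: "a X Y I \<cdot> ((\<one> X \<otimes> r Y) \<otimes> \<one> I) = (\<one> X \<otimes> (r Y \<otimes> \<one> I)) \<cdot> a X (Y \<odot> I) I"
    using a_nat'[of "\<one> X" "r Y" "\<one> I"] by simp
  have "r (X \<odot> Y) \<otimes> \<one> I = (\<one> (X \<odot> Y) \<otimes> l I) \<cdot> a (X \<odot> Y) I I" using t1 by simp
  also have "\<dots> = ia X Y I \<cdot> (\<one> X \<otimes> (\<one> Y \<otimes> l I)) \<cdot> a X Y (I \<odot> I) \<cdot> a (X \<odot> Y) I I"
    by (simp only: n1')
  also have "\<dots> = ia X Y I \<cdot> (\<one> X \<otimes> (\<one> Y \<otimes> l I)) \<cdot> ((\<one> X \<otimes> a Y I I) \<cdot> a X (Y \<odot> I) I \<cdot> (a X Y I \<otimes> \<one> I))"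
    by (simp only: pent[symmetric]) (rule assoc'[symmetric]; simp)
  also have "\<dots> = ia X Y I \<cdot> (\<one> X \<otimes> (\<one> Y \<otimes> l I)) \<cdot> (\<one> X \<otimes> a Y I I) \<cdot> a X (Y \<odot> I) I \<cdot> (a X Y I \<otimes> \<one> I)"
    by simp
  also have "\<dots> = ia X Y I \<cdot> (\<one> X \<otimes> ((\<one> Y \<otimes> l I) \<cdot> a Y I I)) \<cdot> a X (Y \<odot> I) I \<cdot> (a X Y I \<otimes> \<one> I)"
    by (simp add: inter_pre)
  also have "\<dots> = ia X Y I \<cdot> (\<one> X \<otimes> (r Y \<otimes> \<one> I)) \<cdot> a X (Y \<odot> I) I \<cdot> (a X Y I \<otimes> \<one> I)"
    by (simp only: t2)
  also have "\<dots> = ia X Y I \<cdot> a X Y I \<cdot> ((\<one> X \<otimes> r Y) \<otimes> \<one> I) \<cdot> (a X Y I \<otimes> \<one> I)"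
    by (rule arg_cong[where f="\<lambda>x. x \<cdot> (a X Y I \<otimes> \<one> I)"], rule pre[OF n2[symmetric]]) simp_all
  also have "\<dots> = ((\<one> X \<otimes> r Y) \<cdot> a X Y I) \<otimes> \<one> I"
    using a_iso by (simp add: inter)
  finally show "r (X \<odot> Y) \<otimes> \<one> I = ((\<one> X \<otimes> r Y) \<cdot> a X Y I) \<otimes> \<one> I" .
qed simp_all

end


context SM begin

lemma pre1: "p \<cdot> q = e \<Longrightarrow> arr x \<Longrightarrow> arr p \<Longrightarrow> arr q \<Longrightarrow> dom p = cod q \<Longrightarrow> dom x = cod p \<Longrightarrow>
   x \<cdot> p \<cdot> q = x \<cdot> e"
  by (metis assoc')

lemma pre3: "p \<cdot> q \<cdot> s = e \<Longrightarrow> arr x \<Longrightarrow> arr p \<Longrightarrow> arr q \<Longrightarrow> arr s \<Longrightarrow> dom p = cod q \<Longrightarrow> dom q = cod s \<Longrightarrow>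
   dom x = cod p \<Longrightarrow> x \<cdot> p \<cdot> q \<cdot> s = x \<cdot> e"
  by (metis assoc' comp_simps)

lemma rw_split: "arr f \<Longrightarrow> arr g \<Longrightarrow> dom g = cod f \<Longrightarrow> (g \<cdot> f) \<otimes> \<one> Z = (g \<otimes> \<one> Z) \<cdot> (f \<otimes> \<one> Z)"
  by (simp add: inter)
lemma lw_split: "arr f \<Longrightarrow> arr g \<Longrightarrow> dom g = cod f \<Longrightarrow> \<one> Z \<otimes> (g \<cdot> f) = (\<one> Z \<otimes> g) \<cdot> (\<one> Z \<otimes> f)"
  by (simp add: inter)

lemma pent_inv: "a (Y \<odot> A) B D \<cdot> (ia Y A B \<otimes> \<one> D) = ia Y A (B \<odot> D) \<cdot> (\<one> Y \<otimes> a A B D) \<cdot> a Y (A \<odot> B) D"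
proof -
  have p: "a Y A (B \<odot> D) \<cdot> a (Y \<odot> A) B D = (\<one> Y \<otimes> a A B D) \<cdot> a Y (A \<odot> B) D \<cdot> (a Y A B \<otimes> \<one> D)"
    using pentagon[of Y A B D] by simp
  have "a (Y \<odot> A) B D \<cdot> (ia Y A B \<otimes> \<one> D) = ia Y A (B \<odot> D) \<cdot> a Y A (B \<odot> D) \<cdot> a (Y \<odot> A) B D \<cdot> (ia Y A B \<otimes> \<one> D)"
    using a_iso by simp
  also have "\<dots> = ia Y A (B \<odot> D) \<cdot> ((\<one> Y \<otimes> a A B D) \<cdot> a Y (A \<odot> B) D \<cdot> (a Y A B \<otimes> \<one> D)) \<cdot> (ia Y A B \<otimes> \<one> D)"
    by (subst pre1[OF p]) simp_all
  also have "\<dots> = ia Y A (B \<odot> D) \<cdot> (\<one> Y \<otimes> a A B D) \<cdot> a Y (A \<odot> B) D \<cdot> ((a Y A B \<cdot> ia Y A B) \<otimes> \<one> D)"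
    by (simp add: inter_pre)
  also have "\<dots> = ia Y A (B \<odot> D) \<cdot> (\<one> Y \<otimes> a A B D) \<cdot> a Y (A \<odot> B) D"
    using a_iso by simp
  finally show ?thesis .
qed

lemma tri_inv: "a Y I A \<cdot> (ir Y \<otimes> \<one> A) = \<one> Y \<otimes> il A"
proof -
  have "a Y I A \<cdot> (ir Y \<otimes> \<one> A) = (\<one> Y \<otimes> il A) \<cdot> (\<one> Y \<otimes> l A) \<cdot> a Y I A \<cdot> (ir Y \<otimes> \<one> A)"
    using l_iso by (simp add: inter)
  also have "\<dots> = (\<one> Y \<otimes> il A) \<cdot> (r Y \<otimes> \<one> A) \<cdot> (ir Y \<otimes> \<one> A)"
    by (subst pre1[OF triangle]) simp_all
  also have "\<dots> = \<one> Y \<otimes> il A"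
    using r_iso by (simp add: inter_pre)
  finally show ?thesis .
qed

lemma kelly_inv: "ia Y A I \<cdot> (\<one> Y \<otimes> ir A) = ir (Y \<odot> A)"
proof (rule inv_unique[OF r_iso])
  have "ia Y A I \<cdot> (\<one> Y \<otimes> ir A) \<cdot> r (Y \<odot> A) = ia Y A I \<cdot> (\<one> Y \<otimes> ir A) \<cdot> (\<one> Y \<otimes> r A) \<cdot> a Y A I"
    by (simp add: kelly)
  also have "\<dots> = \<one> ((Y \<odot> A) \<odot> I)" using r_iso a_iso by (simp add: inter_pre)
  finally show "ia Y A I \<cdot> (\<one> Y \<otimes> ir A) \<cdot> r (Y \<odot> A) = \<one> ((Y \<odot> A) \<odot> I)" .
qed simp_all

lemma r_inv_nat: "arr f \<Longrightarrow> ir (cod f) \<cdot> f = (f \<otimes> \<one> I) \<cdot> ir (dom f)"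
proof -
  assume f: "arr f"
  have "ir (cod f) \<cdot> f = ir (cod f) \<cdot> f \<cdot> r (dom f) \<cdot> ir (dom f)" using f r_iso by simp
  also have "\<dots> = ir (cod f) \<cdot> r (cod f) \<cdot> (f \<otimes> \<one> I) \<cdot> ir (dom f)"
    by (subst pre1[OF r_nat'[OF f]]) (use f in simp_all)
  also have "\<dots> = (f \<otimes> \<one> I) \<cdot> ir (dom f)" using f r_iso by simp
  finally show ?thesis .
qed

end


context SM begin

lemma fwd_calc:
  assumes f: "iso X (Y \<odot> A) f" and u: "iso (A \<odot> B) I u"
  and w: "arr w" "dom w = I" "cod w = B \<odot> A"
  and key: "a A B A \<cdot> (inv (A \<odot> B) I u \<otimes> \<one> A) \<cdot> il A = (\<one> A \<otimes> w) \<cdot> ir A"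
  shows "a X B A \<cdot> ((((inv X (Y \<odot> A) f \<otimes> \<one> B) \<cdot> ia Y A B \<cdot> (\<one> Y \<otimes> inv (A \<odot> B) I u) \<cdot> ir Y) \<otimes> \<one> A) \<cdot> f)
     = (\<one> X \<otimes> w) \<cdot> ir X"
proof -
  note fs = iso_simps[OF f] and us = iso_simps[OF u]
  define fi where "fi = inv X (Y \<odot> A) f"
  define ui where "ui = inv (A \<odot> B) I u"
  have fis: "arr fi" "dom fi = Y \<odot> A" "cod fi = X" "fi \<cdot> f = \<one> X" unfolding fi_def using f by simp_all
  have uis: "arr ui" "dom ui = I" "cod ui = A \<odot> B" unfolding ui_def using u by simp_all
  note ss = fs fis uis w
  have N1: "a X B A \<cdot> ((fi \<otimes> \<one> B) \<otimes> \<one> A) = (fi \<otimes> \<one> (B \<odot> A)) \<cdot> a (Y \<odot> A) B A"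
    using a_nat'[of fi "\<one> B" "\<one> A"] ss by simp
  have N2: "a Y (A \<odot> B) A \<cdot> ((\<one> Y \<otimes> ui) \<otimes> \<one> A) = (\<one> Y \<otimes> (ui \<otimes> \<one> A)) \<cdot> a Y I A"
    using a_nat'[of "\<one> Y" ui "\<one> A"] ss by simp
  have K3: "(\<one> Y \<otimes> a A B A) \<cdot> (\<one> Y \<otimes> (ui \<otimes> \<one> A)) \<cdot> (\<one> Y \<otimes> il A) = (\<one> Y \<otimes> (\<one> A \<otimes> w)) \<cdot> (\<one> Y \<otimes> ir A)"
  proof -
    have "(\<one> Y \<otimes> a A B A) \<cdot> (\<one> Y \<otimes> (ui \<otimes> \<one> A)) \<cdot> (\<one> Y \<otimes> il A) = \<one> Y \<otimes> (a A B A \<cdot> (ui \<otimes> \<one> A) \<cdot> il A)"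
      using ss by (simp add: lw_split)
    also have "\<dots> = \<one> Y \<otimes> ((\<one> A \<otimes> w) \<cdot> ir A)" using key unfolding ui_def by simp
    also have "\<dots> = (\<one> Y \<otimes> (\<one> A \<otimes> w)) \<cdot> (\<one> Y \<otimes> ir A)" using ss by (simp add: lw_split)
    finally show ?thesis .
  qed
  have N3: "ia Y A (B \<odot> A) \<cdot> (\<one> Y \<otimes> (\<one> A \<otimes> w)) = (\<one> (Y \<odot> A) \<otimes> w) \<cdot> ia Y A I"
    using ia_nat[of "\<one> Y" "\<one> A" w] ss by simp
  have F: "(fi \<otimes> \<one> (B \<odot> A)) \<cdot> (\<one> (Y \<odot> A) \<otimes> w) \<cdot> (f \<otimes> \<one> I) = \<one> X \<otimes> w"
    using ss by (simp add: inter)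
  have "a X B A \<cdot> ((((fi \<otimes> \<one> B) \<cdot> ia Y A B \<cdot> (\<one> Y \<otimes> ui) \<cdot> ir Y) \<otimes> \<one> A) \<cdot> f)
     = a X B A \<cdot> ((fi \<otimes> \<one> B) \<otimes> \<one> A) \<cdot> (ia Y A B \<otimes> \<one> A) \<cdot> ((\<one> Y \<otimes> ui) \<otimes> \<one> A) \<cdot> (ir Y \<otimes> \<one> A) \<cdot> f"
    using ss by (simp add: rw_split)
  also have "\<dots> = (fi \<otimes> \<one> (B \<odot> A)) \<cdot> a (Y \<odot> A) B A \<cdot> (ia Y A B \<otimes> \<one> A) \<cdot> ((\<one> Y \<otimes> ui) \<otimes> \<one> A) \<cdot> (ir Y \<otimes> \<one> A) \<cdot> f"
    using ss by (simp add: N1)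
  also have "\<dots> = (fi \<otimes> \<one> (B \<odot> A)) \<cdot> ia Y A (B \<odot> A) \<cdot> (\<one> Y \<otimes> a A B A) \<cdot> a Y (A \<odot> B) A \<cdot> ((\<one> Y \<otimes> ui) \<otimes> \<one> A) \<cdot> (ir Y \<otimes> \<one> A) \<cdot> f"
    using ss by (simp add: pre1[OF pent_inv])
  also have "\<dots> = (fi \<otimes> \<one> (B \<odot> A)) \<cdot> ia Y A (B \<odot> A) \<cdot> (\<one> Y \<otimes> a A B A) \<cdot> (\<one> Y \<otimes> (ui \<otimes> \<one> A)) \<cdot> a Y I A \<cdot> (ir Y \<otimes> \<one> A) \<cdot> f"
    using ss by (simp add: pre1[OF N2])
  also have "\<dots> = (fi \<otimes> \<one> (B \<odot> A)) \<cdot> ia Y A (B \<odot> A) \<cdot> (\<one> Y \<otimes> a A B A) \<cdot> (\<one> Y \<otimes> (ui \<otimes> \<one> A)) \<cdot> (\<one> Y \<otimes> il A) \<cdot> f"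
    using ss by (simp add: pre1[OF tri_inv])
  also have "\<dots> = (fi \<otimes> \<one> (B \<odot> A)) \<cdot> ia Y A (B \<odot> A) \<cdot> (\<one> Y \<otimes> (\<one> A \<otimes> w)) \<cdot> (\<one> Y \<otimes> ir A) \<cdot> f"
    using ss by (simp add: pre3[OF K3])
  also have "\<dots> = (fi \<otimes> \<one> (B \<odot> A)) \<cdot> (\<one> (Y \<odot> A) \<otimes> w) \<cdot> ia Y A I \<cdot> (\<one> Y \<otimes> ir A) \<cdot> f"
    using ss by (simp add: pre1[OF N3])
  also have "\<dots> = (fi \<otimes> \<one> (B \<odot> A)) \<cdot> (\<one> (Y \<odot> A) \<otimes> w) \<cdot> ir (Y \<odot> A) \<cdot> f"
    using ss by (simp add: pre1[OF kelly_inv])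
  also have "\<dots> = (fi \<otimes> \<one> (B \<odot> A)) \<cdot> (\<one> (Y \<odot> A) \<otimes> w) \<cdot> (f \<otimes> \<one> I) \<cdot> ir X"
  proof -
    have R: "ir (Y \<odot> A) \<cdot> f = (f \<otimes> \<one> I) \<cdot> ir X" using r_inv_nat[of f] fs by simp
    show ?thesis using ss by (simp add: pre1[OF R])
  qed
  also have "\<dots> = (\<one> X \<otimes> w) \<cdot> ir X"
    by (simp only: F)
  finally show ?thesis unfolding fi_def ui_def .
qed

end


context SM begin

lemma wi_I: "weakly_invertible M I"
  unfolding weakly_invertible_def using l_iso[of I] by blast

lemma class_mem: assumes "P_rep M X Y q" shows "q \<in> P_class M X Y q"
proof -
  have s: "arr (snd q)" "cod (snd q) = Y \<odot> fst q" using assms unfolding P_rep_def by (simp_all add: arr_iff)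
  have "P_equiv M Y q q" unfolding P_equiv_def lw_def
    by (rule exI[of _ "\<one> (fst q)"]) (use s iso_id in simp)
  then show ?thesis using assms unfolding P_class_def by blast
qed

lemma class_eq: assumes al: "iso (fst p) (fst q) \<alpha>" and e: "(\<one> Y \<otimes> \<alpha>) \<cdot> snd p = snd q"
  and sp: "arr (snd p)" "cod (snd p) = Y \<odot> fst p"
  shows "P_class M X Y p = P_class M X Y q"
proof -
  note als = iso_simps[OF al]
  have "P_equiv M Y p q' \<longleftrightarrow> P_equiv M Y q q'" if q': "P_rep M X Y q'" for q'
  proof
    assume "P_equiv M Y p q'"
    then obtain \<gamma> where g: "iso (fst p) (fst q') \<gamma>" "(\<one> Y \<otimes> \<gamma>) \<cdot> snd p = snd q'"
      unfolding P_equiv_def lw_def by blast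
    note gs = iso_simps[OF g(1)]
    have "(\<one> Y \<otimes> (\<gamma> \<cdot> inv (fst p) (fst q) \<alpha>)) \<cdot> snd q = (\<one> Y \<otimes> (\<gamma> \<cdot> inv (fst p) (fst q) \<alpha>)) \<cdot> ((\<one> Y \<otimes> \<alpha>) \<cdot> snd p)"
      using e by simp
    also have "\<dots> = (\<one> Y \<otimes> \<gamma>) \<cdot> snd p" using als gs sp al by (simp add: inter)
    also have "\<dots> = snd q'" by (rule g(2))
    finally show "P_equiv M Y q q'" unfolding P_equiv_def lw_def
      using iso_comp[OF iso_inv[OF al] g(1)] by blast
  next
    assume "P_equiv M Y q q'"
    then obtain \<gamma> where g: "iso (fst q) (fst q') \<gamma>" "(\<one> Y \<otimes> \<gamma>) \<cdot> snd q = snd q'"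
      unfolding P_equiv_def lw_def by blast
    note gs = iso_simps[OF g(1)]
    have "snd q' = (\<one> Y \<otimes> \<gamma>) \<cdot> ((\<one> Y \<otimes> \<alpha>) \<cdot> snd p)" using g(2) e by simp
    also have "\<dots> = (\<one> Y \<otimes> (\<gamma> \<cdot> \<alpha>)) \<cdot> snd p" using als gs sp by (simp add: inter)
    finally show "P_equiv M Y p q'" unfolding P_equiv_def lw_def
      using iso_comp[OF al g(1)] by metis
  qed
  then show ?thesis unfolding P_class_def by blast
qed

lemma rep_id: "P_rep M X X (P_id_rep M X)"
  unfolding P_rep_def P_id_rep_def using wi_I ir_arr by simp

end


context SM begin

lemma bwd: assumes f: "f \<in> Ar X (Y \<odot> A)" and P: "P_iso M X Y (A, f)"
  shows "iso X (Y \<odot> A) f"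
proof -
  have fs: "arr f" "dom f = X" "cod f = Y \<odot> A" using f by (simp_all add: arr_iff)
  obtain q where q: "P_rep M Y X q"
    and c1: "P_class M X X (P_comp_rep M X q (A, f)) = P_class M X X (P_id_rep M X)"
    and c2: "P_class M Y Y (P_comp_rep M Y (A, f) q) = P_class M Y Y (P_id_rep M Y)"
    using P unfolding P_iso_def by blast
  obtain B g where qbg: "q = (B, g)" by (cases q)
  have wB: "weakly_invertible M B" and g: "g \<in> Ar Y (X \<odot> B)" using q qbg unfolding P_rep_def by auto
  have gs: "arr g" "dom g = Y" "cod g = X \<odot> B" using g by (simp_all add: arr_iff)
  have "P_id_rep M X \<in> P_class M X X (P_comp_rep M X q (A, f))" using c1 class_mem[OF rep_id] by simp
  then obtain \<alpha> where al: "iso (B \<odot> A) I \<alpha>" and ea: "(\<one> X \<otimes> \<alpha>) \<cdot> (a X B A \<cdot> ((g \<otimes> \<one> A) \<cdot> f)) = ir X"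
    unfolding P_class_def P_equiv_def P_comp_rep_def P_id_rep_def lw_def rw_def qbg by auto
  have "P_id_rep M Y \<in> P_class M Y Y (P_comp_rep M Y (A, f) q)" using c2 class_mem[OF rep_id] by simp
  then obtain \<beta> where be: "iso (A \<odot> B) I \<beta>" and eb: "(\<one> Y \<otimes> \<beta>) \<cdot> (a Y A B \<cdot> ((f \<otimes> \<one> B) \<cdot> g)) = ir Y"
    unfolding P_class_def P_equiv_def P_comp_rep_def P_id_rep_def lw_def rw_def qbg by auto
  note als = iso_simps[OF al] and bes = iso_simps[OF be]
  define L where "L = r X \<cdot> (\<one> X \<otimes> \<alpha>) \<cdot> a X B A \<cdot> (g \<otimes> \<one> A)"
  have Ls: "arr L" "dom L = Y \<odot> A" "cod L = X" unfolding L_def using fs gs als by simp_all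
  have Lf: "L \<cdot> f = \<one> X"
  proof -
    have "L \<cdot> f = r X \<cdot> ((\<one> X \<otimes> \<alpha>) \<cdot> (a X B A \<cdot> ((g \<otimes> \<one> A) \<cdot> f)))"
      unfolding L_def using fs gs als by simp
    also have "\<dots> = \<one> X" unfolding ea using r_iso by simp
    finally show ?thesis .
  qed
  define P where "P = r Y \<cdot> (\<one> Y \<otimes> \<beta>) \<cdot> a Y A B"
  have Pi: "iso ((Y \<odot> A) \<odot> B) Y P" unfolding P_def
    by (intro iso_comp[OF a_iso iso_comp[OF iso_ten[OF iso_id be] r_iso]])
  note Ps = iso_simps[OF Pi]
  have e1: "P \<cdot> (f \<otimes> \<one> B) \<cdot> g = \<one> Y"
  proof -
    have "P \<cdot> (f \<otimes> \<one> B) \<cdot> g = r Y \<cdot> ((\<one> Y \<otimes> \<beta>) \<cdot> (a Y A B \<cdot> ((f \<otimes> \<one> B) \<cdot> g)))"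
      unfolding P_def using fs gs bes by simp
    also have "\<dots> = \<one> Y" unfolding eb using r_iso by simp
    finally show ?thesis .
  qed
  have e2: "(f \<otimes> \<one> B) \<cdot> g \<cdot> P = \<one> ((Y \<odot> A) \<odot> B)"
  proof -
    have "(f \<otimes> \<one> B) \<cdot> g \<cdot> P = inv ((Y \<odot> A) \<odot> B) Y P \<cdot> P \<cdot> (f \<otimes> \<one> B) \<cdot> g \<cdot> P"
      using Pi fs gs by simp
    also have "\<dots> = inv ((Y \<odot> A) \<odot> B) Y P \<cdot> (P \<cdot> (f \<otimes> \<one> B) \<cdot> g) \<cdot> P"
      using Pi Ps fs gs by simp
    also have "\<dots> = \<one> ((Y \<odot> A) \<odot> B)" unfolding e1 using Pi Ps by simp
    finally show ?thesis .
  qed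
  define s where "s = Br M X B \<cdot> (g \<cdot> P) \<cdot> Br M B (Y \<odot> A)"
  have ss: "arr s" "dom s = B \<odot> (Y \<odot> A)" "cod s = B \<odot> X" unfolding s_def using gs Ps by simp_all
  have bn: "Br M (Y \<odot> A) B \<cdot> (f \<otimes> \<one> B) = (\<one> B \<otimes> f) \<cdot> Br M X B"
    using br_nat[OF f id_arr[of B]] .
  have fsr: "(\<one> B \<otimes> f) \<cdot> s = \<one> (B \<odot> (Y \<odot> A))"
  proof -
    have "(\<one> B \<otimes> f) \<cdot> s = (\<one> B \<otimes> f) \<cdot> Br M X B \<cdot> g \<cdot> P \<cdot> Br M B (Y \<odot> A)"
      unfolding s_def using fs gs Ps by simp
    also have "\<dots> = Br M (Y \<odot> A) B \<cdot> (f \<otimes> \<one> B) \<cdot> g \<cdot> P \<cdot> Br M B (Y \<odot> A)"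
      by (simp only: bn)
    also have "\<dots> = Br M (Y \<odot> A) B \<cdot> ((f \<otimes> \<one> B) \<cdot> g \<cdot> P) \<cdot> Br M B (Y \<odot> A)"
      using fs gs Ps by simp
    also have "\<dots> = \<one> (B \<odot> (Y \<odot> A))" unfolding e2 using br_inv[of "Y \<odot> A" B] by simp
    finally show ?thesis .
  qed
  obtain A' where u': "\<exists>u. iso (B \<odot> A') I u" and v': "\<exists>v. iso (A' \<odot> B) I v"
    using wB unfolding weakly_invertible_def by blast
  then obtain u v where u: "iso (B \<odot> A') I u" and v: "iso (A' \<odot> B) I v" by blast
  obtain t where ts: "arr t" "dom t = Y \<odot> A" "cod t = X" "\<one> B \<otimes> t = s"
    using full[OF v u ss] by blast
  have "\<one> B \<otimes> (f \<cdot> t) = (\<one> B \<otimes> f) \<cdot> (\<one> B \<otimes> t)" using fs ts(1-3) by (simp add: inter)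
  also have "\<dots> = \<one> B \<otimes> \<one> (Y \<odot> A)" using fsr ts(4) by simp
  finally have ft: "f \<cdot> t = \<one> (Y \<odot> A)"
    by (rule faith[OF v, rotated -1]) (use fs ts in simp_all)
  have "L = L \<cdot> (f \<cdot> t)" using Ls ft by simp
  also have "\<dots> = L \<cdot> f \<cdot> t" using Ls fs ts by simp
  also have "\<dots> = t" using Lf ts by simp
  finally have Lt: "L = t" .
  show ?thesis by (rule iso_intro[OF fs(1) Ls(1)]) (use fs Ls Lf ft Lt in simp_all)
qed

end


context SM begin

lemma class_eq2: "iso A B \<alpha> \<Longrightarrow> (\<one> Y \<otimes> \<alpha>) \<cdot> f = g \<Longrightarrow> arr f \<Longrightarrow> cod f = Y \<odot> A \<Longrightarrow>
  P_class M X Y (A, f) = P_class M X Y (B, g)"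
  using class_eq[of "(A, f)" "(B, g)"] by simp

lemma fwd: assumes wA: "weakly_invertible M A" and f: "iso X (Y \<odot> A) f"
  shows "P_iso M X Y (A, f)"
proof -
  note fs = iso_simps[OF f]
  obtain B where "\<exists>u. iso (A \<odot> B) I u" "\<exists>v. iso (B \<odot> A) I v"
    using wA unfolding weakly_invertible_def by blast
  then obtain u v where u: "iso (A \<odot> B) I u" and v: "iso (B \<odot> A) I v" by blast
  note us = iso_simps[OF u] and vs = iso_simps[OF v]
  define ui where "ui = inv (A \<odot> B) I u"
  have uis: "arr ui" "dom ui = I" "cod ui = A \<odot> B" "iso I (A \<odot> B) ui" unfolding ui_def using u iso_inv[OF u] by simp_all
  define m where "m = a A B A \<cdot> (ui \<otimes> \<one> A) \<cdot> il A \<cdot> r A"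
  have mi: "iso (A \<odot> I) (A \<odot> (B \<odot> A)) m" unfolding m_def
    by (intro iso_comp[OF r_iso iso_comp[OF iso_inv[OF l_iso] iso_comp[OF iso_ten[OF uis(4) iso_id] a_iso]]])
  note ms = iso_simps[OF mi]
  obtain w where ws: "arr w" "dom w = I" "cod w = B \<odot> A" "\<one> A \<otimes> w = m"
    using full[OF v u ms] by blast
  have wi: "iso I (B \<odot> A) w" using reflect[OF v u ws(1)] ws mi by simp
  have key: "a A B A \<cdot> (inv (A \<odot> B) I u \<otimes> \<one> A) \<cdot> il A = (\<one> A \<otimes> w) \<cdot> ir A"
    unfolding ws(4) m_def ui_def[symmetric] using uis r_iso by simp
  define g where "g = (inv X (Y \<odot> A) f \<otimes> \<one> B) \<cdot> ia Y A B \<cdot> (\<one> Y \<otimes> ui) \<cdot> ir Y"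
  have gs: "arr g" "dom g = Y" "cod g = X \<odot> B" unfolding g_def using f fs uis by simp_all
  have c: "a X B A \<cdot> ((g \<otimes> \<one> A) \<cdot> f) = (\<one> X \<otimes> w) \<cdot> ir X"
    unfolding g_def ui_def by (rule fwd_calc[OF f u ws(1-3) key])
  have wB: "weakly_invertible M B" unfolding weakly_invertible_def using u v by blast
  have q: "P_rep M Y X (B, g)" unfolding P_rep_def using wB gs by (simp add: arr_iff)
  have c1: "P_class M X X (P_comp_rep M X (B, g) (A, f)) = P_class M X X (P_id_rep M X)"
    unfolding P_comp_rep_def P_id_rep_def rw_def fst_conv snd_conv
  proof (rule class_eq2[OF iso_inv[OF wi]])
    show "(\<one> X \<otimes> inv I (B \<odot> A) w) \<cdot> (a X B A \<cdot> ((g \<otimes> \<one> A) \<cdot> f)) = ir X"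
      unfolding c using wi ws(1-3) by (simp add: inter_pre inter)
  qed (use fs gs in simp_all)
  have c2: "P_class M Y Y (P_comp_rep M Y (A, f) (B, g)) = P_class M Y Y (P_id_rep M Y)"
    unfolding P_comp_rep_def P_id_rep_def rw_def fst_conv snd_conv
  proof (rule class_eq2[OF u])
    have "(f \<otimes> \<one> B) \<cdot> g = ia Y A B \<cdot> (\<one> Y \<otimes> ui) \<cdot> ir Y"
      unfolding g_def using f fs uis by (simp add: inter_pre inter)
    then show "(\<one> Y \<otimes> u) \<cdot> (a Y A B \<cdot> ((f \<otimes> \<one> B) \<cdot> g)) = ir Y"
      using u us uis a_iso unfolding ui_def by (simp add: inter_pre inter)
  qed (use fs gs in simp_all)
  show ?thesis unfolding P_iso_def
    using q c1 c2 f unfolding P_rep_def by (auto simp: wA iso_arr)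
qed

lemma part1: "weakly_invertible M A \<Longrightarrow> f \<in> Ar X (Y \<odot> A) \<Longrightarrow> P_iso M X Y (A, f) \<longleftrightarrow> iso X (Y \<odot> A) f"
  using fwd bwd by blast

lemma part2: assumes f: "f \<in> Ar X Y" and P: "P_iso M X Y (pi_rep M Y f)" shows "iso X Y f"
proof -
  have fs: "arr f" "dom f = X" "cod f = Y" using f by (simp_all add: arr_iff)
  have "ir Y \<cdot> f \<in> Ar X (Y \<odot> I)" using fs by (simp add: arr_iff)
  then have i: "iso X (Y \<odot> I) (ir Y \<cdot> f)" using bwd P unfolding pi_rep_def by blast
  have "iso X Y (r Y \<cdot> (ir Y \<cdot> f))" by (rule iso_comp[OF i r_iso])
  then show ?thesis using fs r_iso by simp
qed

end

theorem lemma3p6: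
  fixes M :: "('o, 'm) smc"
  assumes "smc M"
  shows "(\<forall>X Y A f. weakly_invertible M A \<longrightarrow> f \<in> Arr M X (TenO M Y A) \<longrightarrow>
            (P_iso M X Y (A, f) \<longleftrightarrow> iso_in M X (TenO M Y A) f))
       \<and> (\<forall>X Y f. f \<in> Arr M X Y \<longrightarrow> P_iso M X Y (pi_rep M Y f) \<longrightarrow> iso_in M X Y f)"
proof -
  interpret SM M by (rule SM.intro) (rule assms)
  show ?thesis using part1 part2 by blast
qed



end
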